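(* Fix $s\in\mathbb C^n$, let $\hat y\in\hat{\mathbb Y}(s)$ and $\beta=\beta(\hat y)$. Consider the equation $B\theta=\beta+2\pi k$ in unknowns $\theta\in\mathbb R^n$ and integer vector $k\in\mathbb Z^m$. Then: (1) For $\theta\in(-\pi,\pi]^n$, $h_\theta(\hat y)\in\mathbb X(s)$ if and only if there exists $k\in\mathbb Z^m$ such that $(\theta,k)$ solves $B\theta=\beta+2\pi k$. (2) If the equation $B\theta=\beta+2\pi k$ has a solution, then there is a solution $(\theta,k)$ with $\theta\in(-\pi,\pi]^n$, and the set of all solutions $(\theta',k')\in\mathbb R^n\times\mathbb Z^m$ equals $\sigma(\theta,k):=\{(\theta+2\pi\alpha,\,k+B\alpha):\alpha\in\mathbb Z^n\}$; in particular there is at most one such equivalence class of solutions.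
   Context: $G=(N,E)$ is a directed graph with nodes $N=\{0,1,\dots,n\}$ and $m=|E|$ links, whose underlying undirected graph is connected; $(i,j)\in E$ denotes a link from $i$ to $j$. Each link has impedance $z_{ij}=r_{ij}+\mathbf{i}x_{ij}$, each node $i$ shunt admittance $y_i=g_i-\mathbf{i}b_i$. The voltage $V_0$ at node 0 is given and taken as angle reference: $V_0=|V_0|$ real and positive; $v_0:=|V_0|^2$. $\mathbb X(s)$ (for $s=(s_1,\dots,s_n)\in\mathbb C^n$) is the set of $x=(S,I,V,s_0)$ with $S,I\in\mathbb C^E$, $V=(V_1,\dots,V_n)$, $s_0\in\mathbb C$ satisfying $V_i-V_j=z_{ij}I_{ij}$, $S_{ij}=V_iI_{ij}^*$ for $(i,j)\in E$, and $\sum_{k:(j,k)\in E}S_{jk}-\sum_{i:(i,j)\in E}(S_{ij}-z_{ij}|I_{ij}|^2)+y_j^*|V_j|^2=s_j$ for $j\in N$. $\hat{\mathbb Y}(s)$ is the set of real $\hat y=(P,Q,\ell,v,p_0,q_0)$ ($P,Q,\ell$ indexed by $E$, $v=(v_1,\dots,v_n)$), with $S_{ij}:=P_{ij}+\mathbf{i}Q_{ij}$ and $s_j=p_j+\mathbf{i}q_j$, satisfying $p_j=\sum_{k:(j,k)\in E}P_{jk}-\sum_{i:(i,j)\in E}(P_{ij}-r_{ij}\ell_{ij})+g_jv_j$, $q_j=\sum_{k:(j,k)\in E}Q_{jk}-\sum_{i:(i,j)\in E}(Q_{ij}-x_{ij}\ell_{ij})+b_jv_j$ for $j\in N$, and $v_j=v_i-2(r_{ij}P_{ij}+x_{ij}Q_{ij})+(r_{ij}^2+x_{ij}^2)\ell_{ij}$,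 $\ell_{ij}=(P_{ij}^2+Q_{ij}^2)/v_i$ for $(i,j)\in E$. $B$ is the $m\times n$ reduced incidence matrix: $B_{ei}=1$ if link $e$ leaves node $i$, $-1$ if it enters $i$, $0$ otherwise ($e\in E$, $i=1,\dots,n$). $\beta=\beta(\hat y)\in(-\pi,\pi]^m$ with $\beta_{ij}=\angle(v_i-z_{ij}^*S_{ij})$. For $\theta\in(-\pi,\pi]^n$ (and $\theta_0:=0$), $h_\theta(\hat y)=(S,I,V,s_0)$ with $S_{ij}=P_{ij}+\mathbf{i}Q_{ij}$, $I_{ij}=\sqrt{\ell_{ij}}e^{\mathbf{i}(\theta_i-\angle S_{ij})}$, $V_i=\sqrt{v_i}e^{\mathbf{i}\theta_i}$, $s_0=p_0+\mathbf{i}q_0$. *)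

theory Defs
  imports Complex_Main
begin

text \<open>Nodes are 0..n; links are pairs (i,j) of nodes (no self-loops).
  Node vectors (V, v, theta, s, alpha) are functions on nat, only the entries 1..n matter;
  node 0 is handled separately (V_0 = |V_0|, v_0 = |V_0|^2, theta_0 = 0).
  Link vectors are functions on nat \<times> nat, only entries in E matter.\<close>

definition valid_graph :: "nat \<Rightarrow> (nat \<times> nat) set \<Rightarrow> bool" where
  "valid_graph n E \<longleftrightarrow> E \<subseteq> {(i,j). i \<le> n \<and> j \<le> n \<and> i \<noteq> j}
      \<and> (\<forall>i\<in>{0..n}. (0, i) \<in> (E \<union> E\<inverse>)\<^sup>*)"

text \<open>Reduced incidence matrix B (m x n), columns indexed by nodes 1..n.\<close>
definition inc :: "nat \<times> nat \<Rightarrow> nat \<Rightarrow> int" where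
  "inc e i = (if fst e = i then 1 else if snd e = i then -1 else 0)"

definition Bmul :: "nat \<Rightarrow> (nat \<Rightarrow> 'a::comm_ring_1) \<Rightarrow> nat \<times> nat \<Rightarrow> 'a" where
  "Bmul n th e = (\<Sum>i\<in>{1..n}. of_int (inc e i) * th i)"

definition ext0 :: "'a \<Rightarrow> (nat \<Rightarrow> 'a) \<Rightarrow> nat \<Rightarrow> 'a" where
  "ext0 a f i = (if i = 0 then a else f i)"

definition Xset :: "nat \<Rightarrow> (nat \<times> nat) set \<Rightarrow> (nat \<times> nat \<Rightarrow> complex) \<Rightarrow> (nat \<Rightarrow> complex)
    \<Rightarrow> real \<Rightarrow> (nat \<Rightarrow> complex)
    \<Rightarrow> (nat \<times> nat \<Rightarrow> complex) \<Rightarrow> (nat \<times> nat \<Rightarrow> complex) \<Rightarrow> (nat \<Rightarrow> complex) \<Rightarrow> complex \<Rightarrow> bool" where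
  "Xset n E z y V0 s S I V s0 \<longleftrightarrow>
     (let Vt = ext0 (complex_of_real V0) V; st = ext0 s0 s in
      (\<forall>(i,j)\<in>E. Vt i - Vt j = z (i,j) * I (i,j) \<and> S (i,j) = Vt i * cnj (I (i,j))) \<and>
      (\<forall>j\<in>{0..n}.
         (\<Sum>e\<in>{e\<in>E. fst e = j}. S e)
         - (\<Sum>e\<in>{e\<in>E. snd e = j}. S e - z e * complex_of_real ((cmod (I e))\<^sup>2))
         + cnj (y j) * complex_of_real ((cmod (Vt j))\<^sup>2) = st j))"

text \<open>The set Yhat(s): yhat = (P, Q, l, v, p0, q0), with r = Re z, x = Im z,
  g = Re y, b = - Im y (since y = g - i b), v_0 = V0^2.  The squared voltage
  magnitudes v_1..v_n are required to be positive (implicit in the paper: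
  l_ij = (P^2+Q^2)/v_i and sqrt v_i).\<close>
definition Yhat :: "nat \<Rightarrow> (nat \<times> nat) set \<Rightarrow> (nat \<times> nat \<Rightarrow> complex) \<Rightarrow> (nat \<Rightarrow> complex)
    \<Rightarrow> real \<Rightarrow> (nat \<Rightarrow> complex)
    \<Rightarrow> (nat \<times> nat \<Rightarrow> real) \<Rightarrow> (nat \<times> nat \<Rightarrow> real) \<Rightarrow> (nat \<times> nat \<Rightarrow> real)
    \<Rightarrow> (nat \<Rightarrow> real) \<Rightarrow> real \<Rightarrow> real \<Rightarrow> bool" where
  "Yhat n E z y V0 s P Q l v p0 q0 \<longleftrightarrow>
     (let vt = ext0 (V0\<^sup>2) v; pt = ext0 p0 (\<lambda>j. Re (s j)); qt = ext0 q0 (\<lambda>j. Im (s j)) in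
      (\<forall>j\<in>{1..n}. v j > 0) \<and>
      (\<forall>j\<in>{0..n}.
         pt j = (\<Sum>e\<in>{e\<in>E. fst e = j}. P e) - (\<Sum>e\<in>{e\<in>E. snd e = j}. P e - Re (z e) * l e)
                + Re (y j) * vt j \<and>
         qt j = (\<Sum>e\<in>{e\<in>E. fst e = j}. Q e) - (\<Sum>e\<in>{e\<in>E. snd e = j}. Q e - Im (z e) * l e)
                + (- Im (y j)) * vt j) \<and>
      (\<forall>(i,j)\<in>E.
         vt j = vt i - 2 * (Re (z (i,j)) * P (i,j) + Im (z (i,j)) * Q (i,j))
                + ((Re (z (i,j)))\<^sup>2 + (Im (z (i,j)))\<^sup>2) * l (i,j) \<and>
         l (i,j) = ((P (i,j))\<^sup>2 + (Q (i,j))\<^sup>2) / vt i))"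

definition beta :: "(nat \<times> nat \<Rightarrow> complex) \<Rightarrow> real \<Rightarrow> (nat \<times> nat \<Rightarrow> real) \<Rightarrow> (nat \<times> nat \<Rightarrow> real)
    \<Rightarrow> (nat \<Rightarrow> real) \<Rightarrow> nat \<times> nat \<Rightarrow> real" where
  "beta z V0 P Q v e =
     Arg (complex_of_real (ext0 (V0\<^sup>2) v (fst e)) - cnj (z e) * Complex (P e) (Q e))"

definition hS :: "(nat \<times> nat \<Rightarrow> real) \<Rightarrow> (nat \<times> nat \<Rightarrow> real) \<Rightarrow> nat \<times> nat \<Rightarrow> complex" where
  "hS P Q e = Complex (P e) (Q e)"

definition hI :: "(nat \<Rightarrow> real) \<Rightarrow> (nat \<times> nat \<Rightarrow> real) \<Rightarrow> (nat \<times> nat \<Rightarrow> real) \<Rightarrow> (nat \<times> nat \<Rightarrow> real)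
    \<Rightarrow> nat \<times> nat \<Rightarrow> complex" where
  "hI th P Q l e = complex_of_real (sqrt (l e)) * cis (ext0 0 th (fst e) - Arg (Complex (P e) (Q e)))"

definition hV :: "(nat \<Rightarrow> real) \<Rightarrow> (nat \<Rightarrow> real) \<Rightarrow> nat \<Rightarrow> complex" where
  "hV th v i = complex_of_real (sqrt (v i)) * cis (th i)"

definition hs0 :: "real \<Rightarrow> real \<Rightarrow> complex" where
  "hs0 p0 q0 = Complex p0 q0"

definition solves :: "nat \<Rightarrow> (nat \<times> nat) set \<Rightarrow> (nat \<times> nat \<Rightarrow> real) \<Rightarrow> (nat \<Rightarrow> real)
    \<Rightarrow> (nat \<times> nat \<Rightarrow> int) \<Rightarrow> bool" where
  "solves n E bt th k \<longleftrightarrow> (\<forall>e\<in>E. Bmul n th e = bt e + 2 * pi * of_int (k e))"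

end

theory Submission
  imports Defs
begin

lemma cis_eq_iff: "cis a = cis b \<longleftrightarrow> (\<exists>k::int. a = b + 2*pi*k)"
  using sin_cos_eq_iff[of a b] by (auto simp: complex_eq_iff)

lemma edge_core:
 fixes va vb ta tb l :: real and S z :: complex
 assumes va: "va > 0" and vb: "vb > 0" and l: "l = (cmod S)^2 / va"
 and vrel: "vb = va - 2 * Re (z * cnj S) + (cmod z)^2 * l"
 shows "(sqrt va * cis ta - sqrt vb * cis tb = z * (sqrt l * cis (ta - Arg S))) \<longleftrightarrow> (\<exists>k::int. ta - tb = Arg (va - cnj z * S) + 2*pi*k)"
proof -
  define w where "w = va - z * cnj S"
  have cw: "cnj w = va - cnj z * S" by (simp add: w_def)
  have cS: "cnj S = cmod S * cis (- Arg S)"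
  proof (cases "S = 0")
    case False
    have "S = cmod S * sgn S" using False by (simp add: complex_sgn_def scaleR_conv_of_real)
    also have "\<dots> = cmod S * cis (Arg S)" using cis_Arg[OF False] by simp
    finally have "cnj S = cnj (cmod S * cis (Arg S))" by simp
    thus ?thesis by (simp add: cis_cnj)
  qed simp
  have sl: "sqrt l = cmod S / sqrt va" using l va by (simp add: real_sqrt_divide)
  have sva: "sqrt va * sqrt va = va" using va by simp
  have zI: "z * (sqrt l * cis (ta - Arg S)) = sqrt va * cis ta * (z * cnj S) / va"
  proof -
    have "sqrt va * cis ta * (z * cnj S) / va = z * (cmod S * (cis ta * cis (- Arg S))) * (sqrt va / va)"
      by (simp add: cS field_simps)
    also have "sqrt va / va = 1 / sqrt va" using va sva by (metis divide_divide_eq_right div_by_1 real_sqrt_gt_zero less_irrefl nonzero_divide_mult_cancel_left)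
    finally show ?thesis by (simp add: sl cis_mult field_simps)
  qed
  have nw: "(cmod w)^2 = va * vb"
    unfolding vrel l cmod_power2 using va unfolding w_def
    by (simp add: cmod_power2 field_simps power2_eq_square)
  have nw2: "cmod w = sqrt va * sqrt vb"
    by (metis nw norm_ge_zero real_sqrt_mult real_sqrt_unique)
  have wnz: "w \<noteq> 0" using nw va vb by auto
  have cwnz: "cnj w \<noteq> 0" using wnz by simp
  have wc: "w = cmod w * cis (- Arg (cnj w))"
  proof -
    have "cnj w = cmod (cnj w) * sgn (cnj w)" using cwnz by (simp add: complex_sgn_def scaleR_conv_of_real)
    also have "\<dots> = cmod w * cis (Arg (cnj w))" using cis_Arg[OF cwnz] by simp
    finally have "w = cnj (cmod w * cis (Arg (cnj w)))" by (metis complex_cnj_cnj)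
    thus ?thesis by (simp add: cis_cnj)
  qed
  have "sqrt va * cis ta - sqrt va * cis ta * (z * cnj S) / va = sqrt va * cis ta * w / va"
    using va by (simp add: w_def field_simps)
  also have "\<dots> = sqrt vb * cis (ta - Arg (cnj w))"
  proof -
    have sva': "complex_of_real (sqrt va) * complex_of_real (sqrt va) = va" by (metis of_real_mult sva)
    have cc: "cis (ta - Arg (cnj w)) = cis ta * cis (- Arg (cnj w))" by (simp add: cis_mult)
    show ?thesis apply (subst wc) unfolding cc nw2 using va sva' by (simp add: field_simps)
  qed
  finally have e1: "sqrt va * cis ta - sqrt va * cis ta * (z * cnj S) / va = sqrt vb * cis (ta - Arg (cnj w))" .
  have "(sqrt va * cis ta - sqrt vb * cis tb = z * (sqrt l * cis (ta - Arg S)))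
     \<longleftrightarrow> sqrt vb * cis (ta - Arg (cnj w)) = sqrt vb * cis tb"
    unfolding zI e1[symmetric] by (auto simp: algebra_simps)
  also have "\<dots> \<longleftrightarrow> cis (ta - Arg (cnj w)) = cis tb" using vb by simp
  also have "\<dots> \<longleftrightarrow> (\<exists>k::int. ta - tb = Arg (cnj w) + 2*pi*k)"
    unfolding cis_eq_iff by (auto simp: algebra_simps)
  finally show ?thesis by (simp add: cw)
qed

lemma Bmul_edge:
  assumes g: "valid_graph n E" and e: "e \<in> E"
  shows "Bmul n (th :: nat \<Rightarrow> 'a::comm_ring_1) e = ext0 0 th (fst e) - ext0 0 th (snd e)"
proof -
  obtain a b where ab: "e = (a,b)" by (cases e)
  have ab2: "a \<le> n" "b \<le> n" "a \<noteq> b" using g e ab unfolding valid_graph_def by auto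
  have "Bmul n th e = (\<Sum>i\<in>{1..n}. (if a = i then th i else 0) - (if b = i then th i else 0))"
    unfolding Bmul_def by (rule sum.cong) (use ab2 in \<open>auto simp: inc_def ab\<close>)
  hence "Bmul n th e = (\<Sum>i\<in>{1..n}. (if a = i then th i else 0)) - (\<Sum>i\<in>{1..n}. (if b = i then th i else 0))"
    by (simp add: sum_subtractf)
  also have "\<dots> = ext0 0 th a - ext0 0 th b"
    using ab2 by (simp add: ext0_def)
  finally show ?thesis by (simp add: ab)
qed

lemma Bmul_shift:
  assumes "\<forall>i\<in>{1..n}. th' i = th i + 2 * pi * of_int (\<alpha> i)"
  shows "Bmul n th' e = Bmul n th e + 2 * pi * of_int (Bmul n \<alpha> e)"
proof -
  have "Bmul n th' e = (\<Sum>i\<in>{1..n}. of_int (inc e i) * th i + 2 * pi * (of_int (inc e i) * of_int (\<alpha> i)))"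
    unfolding Bmul_def by (rule sum.cong) (auto simp: assms algebra_simps)
  thus ?thesis by (simp add: Bmul_def sum.distrib sum_distrib_left)
qed

lemma sol_char:
  assumes g: "valid_graph n E" and sol: "solves n E bt th k"
  shows "solves n E bt th' k' \<longleftrightarrow>
    (\<exists>\<alpha> :: nat \<Rightarrow> int.
                 (\<forall>i\<in>{1..n}. th' i = th i + 2 * pi * of_int (\<alpha> i)) \<and>
                 (\<forall>e\<in>E. k' e = k e + Bmul n \<alpha> e))"
proof
  assume sol': "solves n E bt th' k'"
  define d where "d x = ext0 0 th' x - ext0 0 th x" for x
  have ed: "d (fst e) - d (snd e) = 2 * pi * of_int (k' e - k e)" if "e \<in> E" for e
  proof -
    have "d (fst e) - d (snd e) = Bmul n th' e - Bmul n th e"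
      using Bmul_edge[OF g that, of th'] Bmul_edge[OF g that, of th] by (simp add: d_def)
    thus ?thesis using sol sol' that unfolding solves_def by (simp add: algebra_simps)
  qed
  have reach: "\<exists>m::int. d i = 2 * pi * m" if "(0, i) \<in> (E \<union> E\<inverse>)\<^sup>*" for i
    using that
  proof (induction rule: rtrancl_induct)
    case base
    then show ?case by (auto simp: d_def ext0_def)
  next
    case (step a b)
    then obtain m :: int where m: "d a = 2 * pi * m" by blast
    from step(2) show ?case
    proof
      assume "(a,b) \<in> E"
      from ed[OF this] m have "d b = 2 * pi * of_int (m - (k' (a,b) - k (a,b)))" by (simp add: algebra_simps)
      thus ?thesis by blast
    next
      assume "(a,b) \<in> E\<inverse>"
      hence "(b,a) \<in> E" by simp
      from ed[OF this] m have "d b = 2 * pi * of_int (m + (k' (b,a) - k (b,a)))" by (simp add: algebra_simps)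
      thus ?thesis by blast
    qed
  qed
  define \<alpha> where "\<alpha> i = (SOME m::int. d i = 2 * pi * m)" for i
  have th': "\<forall>i\<in>{1..n}. th' i = th i + 2 * pi * of_int (\<alpha> i)"
  proof
    fix i assume i: "i \<in> {1..n}"
    hence "\<exists>m::int. d i = 2 * pi * m" using reach g unfolding valid_graph_def by auto
    hence "d i = 2 * pi * \<alpha> i" unfolding \<alpha>_def by (rule someI_ex)
    thus "th' i = th i + 2 * pi * of_int (\<alpha> i)" using i by (simp add: d_def ext0_def)
  qed
  have "\<forall>e\<in>E. k' e = k e + Bmul n \<alpha> e"
  proof
    fix e assume e: "e \<in> E"
    have "Bmul n th' e = Bmul n th e + 2 * pi * of_int (Bmul n \<alpha> e)" by (rule Bmul_shift[OF th'])
    hence "2 * pi * of_int (k' e) = 2 * pi * (of_int (k e + Bmul n \<alpha> e) :: real)"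
      using sol sol' e unfolding solves_def by (simp add: algebra_simps)
    hence "(of_int (k' e) :: real) = of_int (k e + Bmul n \<alpha> e)" by simp
    thus "k' e = k e + Bmul n \<alpha> e" by (simp only: of_int_eq_iff)
  qed
  with th' show "\<exists>\<alpha> :: nat \<Rightarrow> int.
                 (\<forall>i\<in>{1..n}. th' i = th i + 2 * pi * of_int (\<alpha> i)) \<and>
                 (\<forall>e\<in>E. k' e = k e + Bmul n \<alpha> e)" by blast
next
  assume "\<exists>\<alpha> :: nat \<Rightarrow> int.
                 (\<forall>i\<in>{1..n}. th' i = th i + 2 * pi * of_int (\<alpha> i)) \<and>
                 (\<forall>e\<in>E. k' e = k e + Bmul n \<alpha> e)"
  then obtain \<alpha> :: "nat \<Rightarrow> int" where a1: "\<forall>i\<in>{1..n}. th' i = th i + 2 * pi * of_int (\<alpha> i)"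
    and a2: "\<forall>e\<in>E. k' e = k e + Bmul n \<alpha> e" by blast
  show "solves n E bt th' k'" unfolding solves_def
  proof
    fix e assume e: "e \<in> E"
    show "Bmul n th' e = bt e + 2 * pi * of_int (k' e)"
      using Bmul_shift[OF a1, of e] sol e a2 unfolding solves_def by (simp add: algebra_simps)
  qed
qed

lemma sol_norm:
  assumes sol: "solves n E bt th0 k0"
  shows "\<exists>th k. solves n E bt th k \<and> (\<forall>i\<in>{1..n}. - pi < th i \<and> th i \<le> pi)"
proof -
  define \<alpha> where "\<alpha> i = \<lceil>(th0 i - pi) / (2 * pi)\<rceil>" for i
  define th where "th i = th0 i - 2 * pi * of_int (\<alpha> i)" for i
  define k where "k e = k0 e - Bmul n \<alpha> e" for e
  have sh: "\<forall>i\<in>{1..n}. th0 i = th i + 2 * pi * of_int (\<alpha> i)" by (simp add: th_def)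
  have "solves n E bt th k" unfolding solves_def
  proof
    fix e assume e: "e \<in> E"
    show "Bmul n th e = bt e + 2 * pi * of_int (k e)"
      using Bmul_shift[OF sh, of e] sol e unfolding solves_def k_def by (simp add: algebra_simps)
  qed
  moreover have "\<forall>i\<in>{1..n}. - pi < th i \<and> th i \<le> pi"
  proof
    fix i
    define t where "t = (th0 i - pi) / (2 * pi)"
    have t1: "t \<le> of_int \<lceil>t\<rceil>" by (rule le_of_int_ceiling)
    have t2: "of_int \<lceil>t\<rceil> < t + 1" by linarith
    have th0: "th0 i = pi + 2 * pi * t" unfolding t_def by (simp add: field_simps)
    have "th i = pi + 2 * pi * (t - of_int \<lceil>t\<rceil>)" unfolding th_def \<alpha>_def t_def[symmetric] th0 by (simp add: algebra_simps)
    moreover have "2 * pi * (t - of_int \<lceil>t\<rceil>) \<le> 0" using t1 by (simp add: mult_nonneg_nonpos)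
    moreover have "2 * pi * (t - of_int \<lceil>t\<rceil>) > 2 * pi * (-1)" using t2 by (intro mult_strict_left_mono) auto
    ultimately show "- pi < th i \<and> th i \<le> pi" by linarith
  qed
  ultimately show ?thesis by blast
qed

lemma polar: "S = complex_of_real (cmod S) * cis (Arg S)"
proof (cases "S = 0")
  case False
  have "S = cmod S * sgn S" using False by (simp add: complex_sgn_def scaleR_conv_of_real)
  thus ?thesis using cis_Arg[OF False] by simp
qed simp

lemma part1:
  assumes graph: "valid_graph n E"
    and V0_pos: "V0 > 0"
    and yhat: "Yhat n E z y V0 s P Q l v p0 q0"
  shows "Xset n E z y V0 s (hS P Q) (hI th P Q l) (hV th v) (hs0 p0 q0) \<longleftrightarrow>
         (\<exists>k :: nat \<times> nat \<Rightarrow> int. solves n E (beta z V0 P Q v) th k)"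
proof -
  define vt where "vt = ext0 (V0\<^sup>2) v"
  define Vt where "Vt = ext0 (complex_of_real V0) (hV th v)"
  define tt where "tt = ext0 0 th"
  have Y1: "\<forall>j\<in>{1..n}. v j > 0"
   and Y2: "\<forall>j\<in>{0..n}.
         ext0 p0 (\<lambda>j. Re (s j)) j = (\<Sum>e\<in>{e\<in>E. fst e = j}. P e) - (\<Sum>e\<in>{e\<in>E. snd e = j}. P e - Re (z e) * l e)
                + Re (y j) * vt j \<and>
         ext0 q0 (\<lambda>j. Im (s j)) j = (\<Sum>e\<in>{e\<in>E. fst e = j}. Q e) - (\<Sum>e\<in>{e\<in>E. snd e = j}. Q e - Im (z e) * l e)
                + (- Im (y j)) * vt j"
   and Y3: "\<forall>(i,j)\<in>E.
         vt j = vt i - 2 * (Re (z (i,j)) * P (i,j) + Im (z (i,j)) * Q (i,j))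
                + ((Re (z (i,j)))\<^sup>2 + (Im (z (i,j)))\<^sup>2) * l (i,j) \<and>
         l (i,j) = ((P (i,j))\<^sup>2 + (Q (i,j))\<^sup>2) / vt i"
    using yhat unfolding Yhat_def Let_def vt_def[symmetric] by auto
  have Eb: "fst e \<le> n \<and> snd e \<le> n" if "e \<in> E" for e
    using graph that unfolding valid_graph_def by auto
  have vtpos: "vt x > 0" if "x \<le> n" for x
    using Y1 that V0_pos by (auto simp: vt_def ext0_def)
  have Vtf: "Vt x = complex_of_real (sqrt (vt x)) * cis (tt x)" for x
    using V0_pos by (auto simp: Vt_def vt_def tt_def ext0_def hV_def)
  have Ye: "vt b = vt a - 2 * (Re (z e) * P e + Im (z e) * Q e) + ((Re (z e))\<^sup>2 + (Im (z e))\<^sup>2) * l e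
      \<and> l e = ((P e)\<^sup>2 + (Q e)\<^sup>2) / vt a" if "e \<in> E" "e = (a,b)" for e a b
    using Y3 that by auto
  have lnn: "l e \<ge> 0" if "e \<in> E" for e
  proof -
    obtain a b where ab: "e = (a,b)" by (cases e)
    have "vt a > 0" using vtpos Eb[OF that] ab by auto
    thus ?thesis using Ye[OF that ab] by simp
  qed
  have hIe: "hI th P Q l e = complex_of_real (sqrt (l e)) * cis (tt (fst e) - Arg (Complex (P e) (Q e)))" for e
    by (simp add: hI_def tt_def)
  have normI: "(cmod (hI th P Q l e))\<^sup>2 = l e" if "e \<in> E" for e
    using lnn[OF that] by (simp add: hIe norm_mult)
  have normV: "(cmod (Vt j))\<^sup>2 = vt j" if "j \<le> n" for j
    using vtpos[OF that] by (simp add: Vtf norm_mult)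
  have Scond: "hS P Q e = Vt (fst e) * cnj (hI th P Q l e)" if "e \<in> E" for e
  proof -
    obtain a b where ab: "e = (a,b)" by (cases e)
    define S where "S = Complex (P e) (Q e)"
    have va: "vt a > 0" using vtpos Eb[OF that] ab by auto
    have le: "l e = (cmod S)^2 / vt a" using Ye[OF that ab] by (simp add: S_def cmod_power2)
    have "sqrt (vt a) * sqrt (l e) = cmod S" using va le
      by (simp add: real_sqrt_mult[symmetric])
    hence sm: "complex_of_real (sqrt (vt a)) * complex_of_real (sqrt (l e)) = complex_of_real (cmod S)"
      by (metis of_real_mult)
    have fe: "fst e = a" by (simp add: ab)
    have hc: "cis (tt a) * cis (- (tt a - Arg S)) = cis (Arg S)" by (simp add: cis_mult)
    have "Vt (fst e) * cnj (hI th P Q l e) = (complex_of_real (sqrt (vt a)) * complex_of_real (sqrt (l e))) * (cis (tt a) * cis (- (tt a - Arg S)))"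
      unfolding Vtf hIe fe S_def[symmetric] by (simp add: cis_cnj)
    hence "Vt (fst e) * cnj (hI th P Q l e) = complex_of_real (cmod S) * cis (Arg S)"
      unfolding sm hc .
    thus ?thesis using polar[of S] by (simp add: hS_def S_def)
  qed
  have bal: "(\<Sum>e\<in>{e\<in>E. fst e = j}. hS P Q e)
         - (\<Sum>e\<in>{e\<in>E. snd e = j}. hS P Q e - z e * complex_of_real ((cmod (hI th P Q l e))\<^sup>2))
         + cnj (y j) * complex_of_real ((cmod (Vt j))\<^sup>2) = ext0 (hs0 p0 q0) s j" if j: "j \<in> {0..n}" for j
  proof -
    have "(\<Sum>e\<in>{e\<in>E. snd e = j}. hS P Q e - z e * complex_of_real ((cmod (hI th P Q l e))\<^sup>2))
       = (\<Sum>e\<in>{e\<in>E. snd e = j}. hS P Q e - z e * complex_of_real (l e))"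
      by (rule sum.cong) (auto simp del: of_real_power simp: normI)
    moreover have "(cmod (Vt j))\<^sup>2 = vt j" using j normV by auto
    moreover have "Re (ext0 (hs0 p0 q0) s j) = ext0 p0 (\<lambda>j. Re (s j)) j"
        "Im (ext0 (hs0 p0 q0) s j) = ext0 q0 (\<lambda>j. Im (s j)) j"
      by (auto simp: ext0_def hs0_def)
    ultimately show ?thesis using Y2 j
      by (simp add: complex_eq_iff Re_sum Im_sum hS_def)
  qed
  have edgeiff: "(Vt (fst e) - Vt (snd e) = z e * hI th P Q l e) \<longleftrightarrow>
      (\<exists>k::int. Bmul n th e = beta z V0 P Q v e + 2 * pi * k)" if "e \<in> E" for e
  proof -
    obtain a b where ab: "e = (a,b)" by (cases e)
    define S where "S = Complex (P e) (Q e)"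
    have va: "vt a > 0" and vb: "vt b > 0" using vtpos Eb[OF that] ab by auto
    have le: "l e = (cmod S)^2 / vt a" using Ye[OF that ab] by (simp add: S_def cmod_power2)
    have vr: "vt b = vt a - 2 * Re (z e * cnj S) + (cmod (z e))^2 * l e"
      using Ye[OF that ab] by (simp add: S_def cmod_power2)
    have B: "Bmul n th e = tt a - tt b" using Bmul_edge[OF graph that, of th] by (simp add: ab tt_def)
    have bt: "beta z V0 P Q v e = Arg (complex_of_real (vt a) - cnj (z e) * S)"
      by (simp add: beta_def vt_def ab S_def)
    show ?thesis
    proof -
      have fe: "fst e = a" "snd e = b" by (simp_all add: ab)
      show ?thesis unfolding B bt Vtf hIe fe S_def[symmetric] by (rule edge_core[OF va vb le vr])
    qed
  qed
  have "Xset n E z y V0 s (hS P Q) (hI th P Q l) (hV th v) (hs0 p0 q0) \<longleftrightarrow>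
      (\<forall>e\<in>E. Vt (fst e) - Vt (snd e) = z e * hI th P Q l e)"
    unfolding Xset_def Let_def Vt_def[symmetric] using Scond bal by auto
  also have "\<dots> \<longleftrightarrow> (\<forall>e\<in>E. \<exists>k::int. Bmul n th e = beta z V0 P Q v e + 2 * pi * k)"
    using edgeiff by auto
  also have "\<dots> \<longleftrightarrow> (\<exists>k :: nat \<times> nat \<Rightarrow> int. solves n E (beta z V0 P Q v) th k)"
    unfolding solves_def by (rule bchoice_iff)
  finally show ?thesis .
qed

theorem lemma1:
  fixes n :: nat and E :: "(nat \<times> nat) set"
    and z :: "nat \<times> nat \<Rightarrow> complex" and y :: "nat \<Rightarrow> complex"
    and V0 :: real and s :: "nat \<Rightarrow> complex"
    and P Q l :: "nat \<times> nat \<Rightarrow> real" and v :: "nat \<Rightarrow> real" and p0 q0 :: real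
  assumes graph: "valid_graph n E"
    and V0_pos: "V0 > 0"
    and yhat: "Yhat n E z y V0 s P Q l v p0 q0"
  shows
    "(\<forall>th :: nat \<Rightarrow> real. (\<forall>i\<in>{1..n}. - pi < th i \<and> th i \<le> pi) \<longrightarrow>
        (Xset n E z y V0 s (hS P Q) (hI th P Q l) (hV th v) (hs0 p0 q0) \<longleftrightarrow>
         (\<exists>k :: nat \<times> nat \<Rightarrow> int. solves n E (beta z V0 P Q v) th k)))
     \<and>
     ((\<exists>th k. solves n E (beta z V0 P Q v) th k) \<longrightarrow>
        (\<exists>th k. solves n E (beta z V0 P Q v) th k \<and> (\<forall>i\<in>{1..n}. - pi < th i \<and> th i \<le> pi) \<and>
           (\<forall>(th' :: nat \<Rightarrow> real) (k' :: nat \<times> nat \<Rightarrow> int).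
              solves n E (beta z V0 P Q v) th' k' \<longleftrightarrow>
              (\<exists>\<alpha> :: nat \<Rightarrow> int.
                 (\<forall>i\<in>{1..n}. th' i = th i + 2 * pi * of_int (\<alpha> i)) \<and>
                 (\<forall>e\<in>E. k' e = k e + Bmul n \<alpha> e)))))"
  proof
  show "(\<forall>th :: nat \<Rightarrow> real. (\<forall>i\<in>{1..n}. - pi < th i \<and> th i \<le> pi) \<longrightarrow>
        (Xset n E z y V0 s (hS P Q) (hI th P Q l) (hV th v) (hs0 p0 q0) \<longleftrightarrow>
         (\<exists>k :: nat \<times> nat \<Rightarrow> int. solves n E (beta z V0 P Q v) th k)))"
    using part1[OF graph V0_pos yhat] by blast
next
  show "((\<exists>th k. solves n E (beta z V0 P Q v) th k) \<longrightarrow>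
        (\<exists>th k. solves n E (beta z V0 P Q v) th k \<and> (\<forall>i\<in>{1..n}. - pi < th i \<and> th i \<le> pi) \<and>
           (\<forall>(th' :: nat \<Rightarrow> real) (k' :: nat \<times> nat \<Rightarrow> int).
              solves n E (beta z V0 P Q v) th' k' \<longleftrightarrow>
              (\<exists>\<alpha> :: nat \<Rightarrow> int.
                 (\<forall>i\<in>{1..n}. th' i = th i + 2 * pi * of_int (\<alpha> i)) \<and>
                 (\<forall>e\<in>E. k' e = k e + Bmul n \<alpha> e)))))"
  proof
    assume "\<exists>th k. solves n E (beta z V0 P Q v) th k"
    then obtain th0 k0 where "solves n E (beta z V0 P Q v) th0 k0" by blast
    from sol_norm[OF this] obtain th k where "solves n E (beta z V0 P Q v) th k"
      "\<forall>i\<in>{1..n}. - pi < th i \<and> th i \<le> pi" by blast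
    with sol_char[OF graph] show "\<exists>th k. solves n E (beta z V0 P Q v) th k \<and> (\<forall>i\<in>{1..n}. - pi < th i \<and> th i \<le> pi) \<and>
           (\<forall>(th' :: nat \<Rightarrow> real) (k' :: nat \<times> nat \<Rightarrow> int).
              solves n E (beta z V0 P Q v) th' k' \<longleftrightarrow>
              (\<exists>\<alpha> :: nat \<Rightarrow> int.
                 (\<forall>i\<in>{1..n}. th' i = th i + 2 * pi * of_int (\<alpha> i)) \<and>
                 (\<forall>e\<in>E. k' e = k e + Bmul n \<alpha> e)))" by blast
  qed
qed

end
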